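(* Let $M := \langle X \mid R\rangle$ where $R$ is symmetric, and let $N$ be the additive submonoid of $\mathbb{Z}$ generated by $\{|a|-|b| : (a,b)\in R\}$. (1) If $a,b\in\langle X\rangle$ satisfy $a =_M b$, then $|a|-|b| \in N$. (2) Let $a,b \in\langle X\rangle$ be such that $a =_M b$, $|b|<|a|$, and there is no $c \in \mathsf{Z}_M(a)$ with $|b|<|c|<|a|$. Then there exist $e,f \in \langle X\rangle$ with $(e,f)\in R$ and $|a|-|b| \le |e|-|f|$. (3) For every $n \in N$ there exist $a,b\in\langle X\rangle$ with $a =_M b$ and $n = |a|-|b|$. (4) If $N \neq \{0\}$, then $N = d\mathbb{Z}$, where $d = \gcd(N) = \min(\Delta(M)) = \gcd(\Delta(M))$.
   Context: For a set $X$, $\langle X\rangle$ is the free monoid on $X$ (identity $1$); $M=\langle X\mid R\rangle$ is the monoid presented by generators $X$ and relations $R\subseteq\langle X\rangle\times\langle X\rangle$. $R$ is symmetric if $(a,b)\in R$ implies $(b,a)\in R$. For $a,b\in\langle X\rangle$, $a=_M b$ means equal images in $M$; $|a|$ is word length. $\mathsf{Z}_M(a) := \{b\in\langle X\rangle : b =_M a\}$, $\mathsf{L}_M(a) := \{|b| : b\in\mathsf{Z}_M(a)\}$, $\mathcal{L}(M) := \{\mathsf{L}_M(a): a\in\langle X\rangle\}$. For $L\subseteq\mathbb{N}$, $d\in\mathbb{N}^+$ is a distance of $L$ if $[k,k+d]\cap L=\{k,k+d\}$ for some $k\in L$; $\Delta(L)$ is the set of distances of $L$, and $\Delta(M) :=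 \bigcup_{L\in\mathcal{L}(M)}\Delta(L)$. *)

theory Defs
  imports Main
begin

text \<open>Words over the alphabet (the type 'x) are lists; the empty list is the identity 1.
  A presentation is given by a relation R on words.\<close>

definition pres_step :: "('x list \<times> 'x list) set \<Rightarrow> 'x list \<Rightarrow> 'x list \<Rightarrow> bool" where
  "pres_step R u v \<longleftrightarrow> (\<exists>x y a b. (a, b) \<in> R \<and> u = x @ a @ y \<and> v = x @ b @ y)"

definition eqM :: "('x list \<times> 'x list) set \<Rightarrow> 'x list \<Rightarrow> 'x list \<Rightarrow> bool" where
  "eqM R = equivclp (pres_step R)"

definition ZM :: "('x list \<times> 'x list) set \<Rightarrow> 'x list \<Rightarrow> 'x list set" where
  "ZM R a = {b. eqM R b a}"

definition LM :: "('x list \<times> 'x list) set \<Rightarrow> 'x list \<Rightarrow> nat set" where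
  "LM R a = length ` ZM R a"

definition distances :: "nat set \<Rightarrow> nat set" where
  "distances L = {d. d > 0 \<and> (\<exists>k\<in>L. {k..k+d} \<inter> L = {k, k+d})}"

definition DeltaM :: "('x list \<times> 'x list) set \<Rightarrow> nat set" where
  "DeltaM R = (\<Union>a. distances (LM R a))"

inductive_set lenN :: "('x list \<times> 'x list) set \<Rightarrow> int set" for R where
  zero: "0 \<in> lenN R"
| add: "(a, b) \<in> R \<Longrightarrow> n \<in> lenN R \<Longrightarrow> int (length a) - int (length b) + n \<in> lenN R"

end

theory Submission
  imports Defs
begin

lemma lenN_gen: "(a, b) \<in> R \<Longrightarrow> int (length a) - int (length b) \<in> lenN R"
  using lenN.add[OF _ lenN.zero, of a b R] by simp

lemma lenN_plus: "n \<in> lenN R \<Longrightarrow> m \<in> lenN R \<Longrightarrow> n + m \<in> lenN R"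
proof (induction n rule: lenN.induct)
  case zero then show ?case by simp
next
  case (add a b n)
  then show ?case using lenN.add[of a b R "n + m"] by (simp add: add.assoc)
qed

lemma lenN_uminus: assumes "sym R" shows "n \<in> lenN R \<Longrightarrow> - n \<in> lenN R"
proof (induction n rule: lenN.induct)
  case zero then show ?case by (simp add: lenN.zero)
next
  case (add a b n)
  have "(b, a) \<in> R" using add(1) assms by (meson symD)
  then have "int (length b) - int (length a) \<in> lenN R" by (rule lenN_gen)
  from lenN_plus[OF add(3) this] show ?case by simp
qed

lemma lenN_mult_nat: "m \<in> lenN R \<Longrightarrow> int k * m \<in> lenN R"
proof (induction k)
  case 0 then show ?case by (simp add: lenN.zero)
next
  case (Suc k)
  then show ?case using lenN_plus[of m R "int k * m"] by (simp add: algebra_simps)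
qed

lemma lenN_mult: assumes "sym R" "m \<in> lenN R" shows "k * m \<in> lenN R"
proof (cases "k \<ge> 0")
  case True
  then show ?thesis using lenN_mult_nat[OF assms(2), of "nat k"] by simp
next
  case False
  have "int (nat (-k)) * m \<in> lenN R" by (rule lenN_mult_nat[OF assms(2)])
  from lenN_uminus[OF assms(1) this] False show ?thesis by simp
qed

lemma step_len:
  assumes "sym R" "symclp (pres_step R) y z"
  shows "\<exists>e f. (e, f) \<in> R \<and> int (length y) - int (length z) = int (length e) - int (length f)"
  using assms(2)
proof (cases rule: symclpE)
  case base
  then show ?thesis unfolding pres_step_def by force
next
  case sym
  then obtain x w a b where "(a, b) \<in> R" "z = x @ a @ w" "y = x @ b @ w"
    unfolding pres_step_def by blast
  moreover have "(b, a) \<in> R" using assms(1) calculation(1) by (meson symD)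
  ultimately show ?thesis by force
qed

lemma part1:
  assumes "sym R" "eqM R a b"
  shows "int (length a) - int (length b) \<in> lenN R"
  using assms(2) unfolding eqM_def equivclp_def
proof (induction rule: rtranclp_induct)
  case base then show ?case by (simp add: lenN.zero)
next
  case (step y z)
  obtain e f where "(e, f) \<in> R" "int (length y) - int (length z) = int (length e) - int (length f)"
    using step_len[OF assms(1) step(2)] by blast
  then have "int (length y) - int (length z) \<in> lenN R" using lenN_gen by metis
  from lenN_plus[OF step(3) this] show ?case by simp
qed

lemma chain_cross:
  "r\<^sup>*\<^sup>* u v \<Longrightarrow> P u \<Longrightarrow> \<not> P v \<Longrightarrow> \<exists>y z. r\<^sup>*\<^sup>* u y \<and> r y z \<and> P y \<and> \<not> P z"
proof (induction rule: rtranclp_induct)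
  case base then show ?case by simp
next
  case (step y z)
  then show ?case
    by (cases "P y") (auto intro: rtranclp.rtrancl_into_rtrancl)
qed

lemma part2:
  assumes "sym R" "eqM R a b" "length b < length a"
    "\<not> (\<exists>c\<in>ZM R a. length b < length c \<and> length c < length a)"
  shows "\<exists>e f. (e, f) \<in> R \<and> int (length a) - int (length b) \<le> int (length e) - int (length f)"
proof -
  have "(symclp (pres_step R))\<^sup>*\<^sup>* a b" using assms(2) unfolding eqM_def equivclp_def .
  from chain_cross[OF this, of "\<lambda>y. length y \<ge> length a"] assms(3)
  obtain y z where yz: "(symclp (pres_step R))\<^sup>*\<^sup>* a y" "symclp (pres_step R) y z"
    "length y \<ge> length a" "length z < length a" by auto
  have "(symclp (pres_step R))\<^sup>*\<^sup>* a z" using yz(1,2) by (meson rtranclp.rtrancl_into_rtrancl)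
  then have "eqM R a z" unfolding eqM_def equivclp_def .
  then have "z \<in> ZM R a" unfolding ZM_def eqM_def by (simp add: equivclp_sym)
  with assms(4) yz(4) have "length z \<le> length b" by auto
  obtain e f where "(e, f) \<in> R" "int (length y) - int (length z) = int (length e) - int (length f)"
    using step_len[OF assms(1) yz(2)] by blast
  then show ?thesis using yz(3) \<open>length z \<le> length b\<close> by (intro exI[of _ e] exI[of _ f]) auto
qed

lemma eqM_left: "eqM R a b \<Longrightarrow> eqM R (f @ a) (f @ b)"
  unfolding eqM_def equivclp_def
proof (induction rule: rtranclp_induct)
  case base then show ?case by simp
next
  case (step y z)
  have "symclp (pres_step R) (f @ y) (f @ z)"
    using step(2) unfolding symclp_def pres_step_def
    by (metis append.assoc)
  with step(3) show ?case by (meson rtranclp.rtrancl_into_rtrancl)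
qed

lemma part3:
  "n \<in> lenN R \<Longrightarrow> \<exists>a b. eqM R a b \<and> n = int (length a) - int (length b)"
proof (induction n rule: lenN.induct)
  case zero
  then show ?case by (intro exI[of _ "[]"]) (simp add: eqM_def)
next
  case (add e f n)
  then obtain a b where ab: "eqM R a b" "n = int (length a) - int (length b)" by blast
  have "pres_step R (e @ a) (f @ a)" unfolding pres_step_def using add(1)
    by (metis append_Nil)
  then have "eqM R (e @ a) (f @ a)" unfolding eqM_def by (simp add: r_into_equivclp)
  moreover have "eqM R (f @ a) (f @ b)" by (rule eqM_left[OF ab(1)])
  ultimately have "eqM R (e @ a) (f @ b)" unfolding eqM_def by (meson equivclp_trans)
  then show ?case using ab(2) by (intro exI[of _ "e @ a"] exI[of _ "f @ b"]) auto
qed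

lemma lenN_dZ:
  assumes "sym R" "lenN R \<noteq> {0}"
  shows "Gcd (lenN R) > 0 \<and> lenN R = {Gcd (lenN R) * k | k. True}"
proof -
  let ?N = "lenN R"
  obtain n where n: "n \<in> ?N" "n \<noteq> 0" using assms(2) lenN.zero by blast
  have "\<exists>p. p \<in> ?N \<and> p > 0"
  proof (cases "n > 0")
    case True then show ?thesis using n by blast
  next
    case False then show ?thesis using n lenN_uminus[OF assms(1) n(1)] by (intro exI[of _ "-n"]) auto
  qed
  then obtain p0 where p0: "p0 \<in> ?N" "p0 > 0" by blast
  define m where "m = (LEAST k. int k \<in> ?N \<and> k > 0)"
  have ex: "int (nat p0) \<in> ?N \<and> nat p0 > 0" using p0 by simp
  have mN: "int m \<in> ?N" "m > 0" using LeastI_ex[of "\<lambda>k. int k \<in> ?N \<and> k > 0"] ex unfolding m_def by blast+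
  have mmin: "k \<ge> m" if "int k \<in> ?N" "k > 0" for k unfolding m_def using that by (simp add: Least_le)
  have dv: "int m dvd x" if "x \<in> ?N" for x
  proof -
    have "- (x div int m) * int m \<in> ?N" by (rule lenN_mult[OF assms(1) mN(1)])
    from lenN_plus[OF that this] have "x mod int m \<in> ?N" by (simp add: minus_div_mult_eq_mod)
    moreover have "x mod int m \<ge> 0" "x mod int m < int m" using mN(2) by auto
    ultimately have "x mod int m = 0"
      using mmin[of "nat (x mod int m)"] by (cases "x mod int m = 0") auto
    then show ?thesis by auto
  qed
  have "Gcd ?N = int m"
  proof (rule zdvd_antisym_nonneg)
    show "Gcd ?N dvd int m" by (rule Gcd_dvd[OF mN(1)])
    show "int m dvd Gcd ?N" by (rule Gcd_greatest) (use dv in auto)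
  qed simp_all
  moreover have "?N = {int m * k | k. True}"
  proof
    show "?N \<subseteq> {int m * k | k. True}" using dv by (auto elim!: dvdE)
    show "{int m * k | k. True} \<subseteq> ?N" using lenN_mult[OF assms(1) mN(1)] by (auto simp: mult.commute)
  qed
  ultimately show ?thesis using mN(2) by simp
qed

theorem lemma4p2:
  fixes R :: "('x list \<times> 'x list) set"
  assumes "sym R"
  shows "(\<forall>a b. eqM R a b \<longrightarrow> int (length a) - int (length b) \<in> lenN R)
    \<and> (\<forall>a b. eqM R a b \<and> length b < length a
          \<and> \<not> (\<exists>c\<in>ZM R a. length b < length c \<and> length c < length a)
        \<longrightarrow> (\<exists>e f. (e, f) \<in> R \<and>
               int (length a) - int (length b) \<le> int (length e) - int (length f)))
    \<and> (\<forall>n\<in>lenN R. \<exists>a b. eqM R a b \<and> n = int (length a) - int (length b))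
    \<and> (lenN R \<noteq> {0} \<longrightarrow>
        (let d = Gcd (lenN R) in
           lenN R = {d * k | k. True}
           \<and> nat d \<in> DeltaM R \<and> (\<forall>e\<in>DeltaM R. nat d \<le> e)
           \<and> d = int (Gcd (DeltaM R))))"
proof (intro conjI)
  show "\<forall>a b. eqM R a b \<longrightarrow> int (length a) - int (length b) \<in> lenN R"
    using part1[OF assms] by blast
  show "\<forall>a b. eqM R a b \<and> length b < length a
          \<and> \<not> (\<exists>c\<in>ZM R a. length b < length c \<and> length c < length a)
        \<longrightarrow> (\<exists>e f. (e, f) \<in> R \<and>
               int (length a) - int (length b) \<le> int (length e) - int (length f))"
    using part2[OF assms] by blast
  show "\<forall>n\<in>lenN R. \<exists>a b. eqM R a b \<and> n = int (length a) - int (length b)"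
    using part3 by blast
  show "lenN R \<noteq> {0} \<longrightarrow>
        (let d = Gcd (lenN R) in
           lenN R = {d * k | k. True}
           \<and> nat d \<in> DeltaM R \<and> (\<forall>e\<in>DeltaM R. nat d \<le> e)
           \<and> d = int (Gcd (DeltaM R)))"
  proof
    assume ne: "lenN R \<noteq> {0}"
    define d where "d = Gcd (lenN R)"
    have dpos: "d > 0" and Neq: "lenN R = {d * k | k. True}" using lenN_dZ[OF assms ne] d_def by auto
    have dvN: "d dvd x" if "x \<in> lenN R" for x using that Neq by auto
    have dmin: "nat d \<le> e" if eD0: "e \<in> DeltaM R" for e
    proof -
      obtain a where "e \<in> distances (LM R a)" using eD0 unfolding DeltaM_def by blast
      then obtain k where k: "e > 0" "k \<in> LM R a" "k + e \<in> LM R a"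
        unfolding distances_def by blast
      then obtain c c' where c: "eqM R c a" "eqM R c' a" "length c = k" "length c' = k + e"
        unfolding LM_def ZM_def by auto
      have "eqM R c' c" using c(1,2) unfolding eqM_def by (meson equivclp_sym equivclp_trans)
      from part1[OF assms this] c(3,4) have "int e \<in> lenN R" by simp
      then have "d dvd int e" by (rule dvN)
      then show ?thesis using k(1) dpos by (simp add: zdvd_imp_le nat_le_iff)
    qed
    have dDelta: "nat d \<in> DeltaM R"
    proof -
      have "d \<in> lenN R" using Neq by (auto intro: exI[of _ 1])
      from part3[OF this] obtain a b where ab: "eqM R a b" "d = int (length a) - int (length b)" by blast
      have "length b \<in> LM R a" unfolding LM_def ZM_def using ab(1) by (auto simp: eqM_def equivclp_sym)
      moreover have "length b + nat d \<in> LM R a" unfolding LM_def ZM_def using ab dpos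
        by (auto simp: eqM_def intro!: image_eqI[of _ _ a])
      moreover have "{length b..length b + nat d} \<inter> LM R a \<subseteq> {length b, length b + nat d}"
      proof
        fix j assume j: "j \<in> {length b..length b + nat d} \<inter> LM R a"
        then obtain c where c: "eqM R c a" "length c = j" unfolding LM_def ZM_def by auto
        have "eqM R c b" using c(1) ab(1) unfolding eqM_def by (meson equivclp_trans)
        from dvN[OF part1[OF assms this]] c(2) have "d dvd int j - int (length b)" by simp
        then obtain t where t: "int j - int (length b) = d * t" by (auto elim!: dvdE)
        have jj: "length b \<le> j" "int j \<le> int (length b) + d" using j dpos by auto
        have "0 \<le> d * t" "d * t \<le> d * 1" using jj t by linarith+
        then have "0 \<le> t" "t \<le> 1" using dpos
          by (simp_all add: zero_le_mult_iff mult_le_cancel_left)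
        then have "t = 0 \<or> t = 1" by auto
        then show "j \<in> {length b, length b + nat d}" using t dpos by auto
      qed
      ultimately have "nat d \<in> distances (LM R a)" unfolding distances_def using dpos by auto
      then show ?thesis unfolding DeltaM_def by blast
    qed
    have "Gcd (DeltaM R) = nat d"
    proof (rule dvd_antisym)
      show "Gcd (DeltaM R) dvd nat d" by (rule Gcd_dvd[OF dDelta])
      show "nat d dvd Gcd (DeltaM R)"
      proof (rule Gcd_greatest)
        fix e assume eD: "e \<in> DeltaM R"
        obtain a where "e \<in> distances (LM R a)" using eD unfolding DeltaM_def by blast
        then obtain k where k: "k \<in> LM R a" "k + e \<in> LM R a"
          unfolding distances_def by blast
        then obtain c c' where c: "eqM R c a" "eqM R c' a" "length c = k" "length c' = k + e"
          unfolding LM_def ZM_def by auto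
        have "eqM R c' c" using c(1,2) unfolding eqM_def by (meson equivclp_sym equivclp_trans)
        from part1[OF assms this] c(3,4) have "int e \<in> lenN R" by simp
        then have "d dvd int e" by (rule dvN)
        then show "nat d dvd e" using dpos by (metis int_dvd_int_iff int_nat_eq less_le)
      qed
    qed
    then show "let d = Gcd (lenN R) in
           lenN R = {d * k | k. True}
           \<and> nat d \<in> DeltaM R \<and> (\<forall>e\<in>DeltaM R. nat d \<le> e)
           \<and> d = int (Gcd (DeltaM R))"
      using Neq dDelta dmin dpos unfolding d_def[symmetric] Let_def by simp
  qed
qed

end
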